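(* Let $n\in\mathbb{N}$ and let $a=3$ or $a>5$ (real). Let $E_n(a,1)$ be the $(n+1)\times n$ matrix whose $(i,j)$ entry is $-a$ if $i=j$, $1$ if $j=i+1$, $a$ if $i=j+1$, $-1$ if $i=j+2$, and $0$ otherwise, and let $B_n(a,1)$ be the $(n+3)\times n$ matrix whose first row is $(1,0,\dots,0)$, whose rows $2,\dots,n+2$ are the rows of $E_n(a,1)$ in order, and whose last row is $(0,\dots,0,-1)$. Then the columns of $B_n(a,1)$ are linearly independent, and every non-zero linear combination of these columns has at least $4$ non-zero entries. *)

theory Defs
  imports Main "HOL.Real"
begin

text \<open>Matrices are functions on 0-based indices (row i, column j).
  E_n(a,1): the (n+1) x n matrix with entry -a if i=j, 1 if j=i+1, a if i=j+1,
  -1 if i=j+2, 0 otherwise (rows i < n+1, columns j < n).\<close>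
definition E_mat :: "real \<Rightarrow> nat \<Rightarrow> nat \<Rightarrow> real" where
  "E_mat a i j =
     (if i = j then - a
      else if j = i + 1 then 1
      else if i = j + 1 then a
      else if i = j + 2 then -1
      else 0)"

definition B_mat :: "nat \<Rightarrow> real \<Rightarrow> nat \<Rightarrow> nat \<Rightarrow> real" where
  "B_mat n a i j =
     (if i = 0 then (if j = 0 then 1 else 0)
      else if i \<le> n + 1 then E_mat a (i - 1) j
      else (if j = n - 1 then -1 else 0))"

definition lincomb_B :: "nat \<Rightarrow> real \<Rightarrow> (nat \<Rightarrow> real) \<Rightarrow> nat \<Rightarrow> real" where
  "lincomb_B n a c i = (\<Sum>j<n. B_mat n a i j * c j)"

end

theory Submission
  imports Defs Complex_Main
begin

lemma Bcol:
  assumes "j < n" "k < n + 3"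
  shows "B_mat n a k j = (if k = j then 1 else 0) - a * (if k = j + 1 then 1 else 0)
     + a * (if k = j + 2 then 1 else 0) - (if k = j + 3 then 1 else 0)"
  using assms unfolding B_mat_def E_mat_def by auto

lemma colsum:
  assumes "j < n"
  shows "(\<Sum>k<n+3. B_mat n a k j * w k) = w j - a * w (j+1) + a * w (j+2) - w (j+3)"
proof -
  have "(\<Sum>k<n+3. B_mat n a k j * w k) = (\<Sum>k<n+3. (if k = j then w k else 0) - a * (if k = j + 1 then w k else 0)
     + a * (if k = j + 2 then w k else 0) - (if k = j + 3 then w k else 0))"
    by (rule sum.cong) (auto simp: Bcol[OF assms] algebra_simps)
  also have "\<dots> = w j - a * w (j+1) + a * w (j+2) - w (j+3)"
    using assms by (simp add: sum.distrib sum_subtractf sum_distrib_left[symmetric])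
  finally show ?thesis .
qed

lemma moment:
  "(\<Sum>k<n+3. lincomb_B n a c k * w k) = (\<Sum>j<n. c j * (w j - a * w (j+1) + a * w (j+2) - w (j+3)))"
proof -
  have "(\<Sum>k<n+3. lincomb_B n a c k * w k) = (\<Sum>k<n+3. \<Sum>j<n. c j * (B_mat n a k j * w k))"
    unfolding lincomb_B_def sum_distrib_right by (simp add: mult_ac)
  also have "\<dots> = (\<Sum>j<n. \<Sum>k<n+3. c j * (B_mat n a k j * w k))"
    by (rule sum.swap)
  also have "\<dots> = (\<Sum>j<n. c j * (\<Sum>k<n+3. B_mat n a k j * w k))"
    by (simp add: sum_distrib_left)
  also have "\<dots> = (\<Sum>j<n. c j * (w j - a * w (j+1) + a * w (j+2) - w (j+3)))"
    by (rule sum.cong) (auto simp: colsum)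
  finally show ?thesis .
qed

lemma vander:
  fixes x y z \<alpha> \<beta> \<gamma> :: real
  assumes "x \<noteq> y" "y \<noteq> z" "x \<noteq> z"
    "\<alpha> + \<beta> + \<gamma> = 0" "\<alpha>*x + \<beta>*y + \<gamma>*z = 0" "\<alpha>*x^2 + \<beta>*y^2 + \<gamma>*z^2 = 0"
  shows "\<alpha> = 0 \<and> \<beta> = 0 \<and> \<gamma> = 0"
proof -
  have "\<alpha>*(x-y)*(x-z) = (\<alpha>*x^2 + \<beta>*y^2 + \<gamma>*z^2) - (y+z)*(\<alpha>*x + \<beta>*y + \<gamma>*z) + y*z*(\<alpha> + \<beta> + \<gamma>)"
    by (simp add: algebra_simps power2_eq_square)
  hence a: "\<alpha> = 0" using assms by simp
  have "\<beta>*(y-x)*(y-z) = (\<alpha>*x^2 + \<beta>*y^2 + \<gamma>*z^2) - (x+z)*(\<alpha>*x + \<beta>*y + \<gamma>*z) + x*z*(\<alpha> + \<beta> + \<gamma>)"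
    by (simp add: algebra_simps power2_eq_square)
  hence b: "\<beta> = 0" using assms by simp
  show ?thesis using a b assms by simp
qed

lemma expo_ord:
  fixes r \<alpha> \<beta> \<gamma> :: real
  assumes "i < j" "j < l" "r > 1"
    "\<alpha> + \<beta> + \<gamma> = 0" "\<alpha>*r^i + \<beta>*r^j + \<gamma>*r^l = 0"
    "\<alpha>*(1/r)^i + \<beta>*(1/r)^j + \<gamma>*(1/r)^l = 0"
  shows "\<alpha> = 0 \<and> \<beta> = 0 \<and> \<gamma> = 0"
proof -
  define m where "m = j - i"
  define L where "L = l - i"
  have j: "j = i + m" and l: "l = i + L" and mL: "0 < m" "m < L" using assms by (auto simp: m_def L_def)
  have ri: "r^i > 0" using assms by simp
  have "r^i * (\<alpha> + \<beta>*r^m + \<gamma>*r^L) = 0"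
    using assms(5) unfolding j l by (simp add: power_add algebra_simps)
  hence E2: "\<alpha> + \<beta>*r^m + \<gamma>*r^L = 0" using ri by (metis mult_eq_0_iff order_less_irrefl)
  have "(1/r)^i * (\<alpha> + \<beta>/r^m + \<gamma>/r^L) = 0"
    using assms(6) unfolding j l by (simp add: power_add algebra_simps power_one_over)
  hence E3: "\<alpha> + \<beta>/r^m + \<gamma>/r^L = 0" using assms(3) by simp
  define P where "P = \<beta>*(r^m - 1)"
  define Q where "Q = \<gamma>*(r^L - 1)"
  have PQ: "P + Q = 0" using E2 assms(4) unfolding P_def Q_def by (simp add: algebra_simps)
  have rm: "r^m > 0" "r^L > 0" using assms by auto
  have "P / r^m + Q / r^L = (\<beta>+\<gamma>) - (\<beta>/r^m + \<gamma>/r^L)"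
  proof -
    have h1: "\<beta>*(r^m-1)/r^m = \<beta> - \<beta>/r^m" using rm assms(3) by (simp add: diff_divide_distrib right_diff_distrib)
    have h2: "\<gamma>*(r^L-1)/r^L = \<gamma> - \<gamma>/r^L" using rm assms(3) by (simp add: diff_divide_distrib right_diff_distrib)
    show ?thesis unfolding P_def Q_def h1 h2 by simp
  qed
  hence "P / r^m + Q / r^L = 0" using E3 assms(4) by linarith
  moreover have "Q = -P" using PQ by linarith
  ultimately have "P * (1/r^m - 1/r^L) = 0" by (simp add: right_diff_distrib)
  moreover have "r^m < r^L" using mL assms(3) by (simp add: power_strict_increasing)
  hence "1/r^m - 1/r^L \<noteq> 0" using rm by (simp add: field_simps)
  ultimately have P0: "P = 0" by simp
  have "r^m > 1" "r^L > 1" using mL assms(3) by (auto intro: one_less_power)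
  thus ?thesis using P0 PQ assms(4) unfolding P_def Q_def by auto
qed

lemma expo:
  fixes r \<alpha> \<beta> \<gamma> :: real and x y z :: nat
  assumes "x \<noteq> y" "y \<noteq> z" "x \<noteq> z" "r > 1"
    "\<And>t. t \<in> {1, r, 1/r} \<Longrightarrow> \<alpha>*t^x + \<beta>*t^y + \<gamma>*t^z = 0"
  shows "\<alpha> = 0 \<and> \<beta> = 0 \<and> \<gamma> = 0"
proof -
  have e1: "\<alpha> + \<beta> + \<gamma> = 0" using assms(5)[of 1] by simp
  have e2: "\<alpha>*r^x + \<beta>*r^y + \<gamma>*r^z = 0" using assms(5)[of r] by simp
  have e3: "\<alpha>*(1/r)^x + \<beta>*(1/r)^y + \<gamma>*(1/r)^z = 0" using assms(5)[of "1/r"] by simp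
  consider "x < y" "y < z" | "x < z" "z < y" | "y < x" "x < z" | "y < z" "z < x" | "z < x" "x < y" | "z < y" "y < x"
    using assms(1-3) by linarith
  thus ?thesis
  proof cases
    case 1 thus ?thesis using expo_ord[of x y z r \<alpha> \<beta> \<gamma>] e1 e2 e3 assms(4) by auto
  next
    case 2 thus ?thesis using expo_ord[of x z y r \<alpha> \<gamma> \<beta>] e1 e2 e3 assms(4) by (auto simp: algebra_simps)
  next
    case 3 thus ?thesis using expo_ord[of y x z r \<beta> \<alpha> \<gamma>] e1 e2 e3 assms(4) by (auto simp: algebra_simps)
  next
    case 4 thus ?thesis using expo_ord[of y z x r \<beta> \<gamma> \<alpha>] e1 e2 e3 assms(4) by (auto simp: algebra_simps)
  next
    case 5 thus ?thesis using expo_ord[of z x y r \<gamma> \<alpha> \<beta>] e1 e2 e3 assms(4) by (auto simp: algebra_simps)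
  next
    case 6 thus ?thesis using expo_ord[of z y x r \<gamma> \<beta> \<alpha>] e1 e2 e3 assms(4) by (auto simp: algebra_simps)
  qed
qed

lemma pad3:
  fixes S :: "nat set"
  assumes "S \<subseteq> {..<N}" "card S \<le> 3"
  obtains x y z where "S \<subseteq> {x,y,z}" "x \<noteq> y" "y \<noteq> z" "x \<noteq> z"
proof -
  have fS: "finite S" using assms(1) finite_subset by blast
  obtain R where R: "R \<subseteq> {N..<N+3}" "card R = 3 - card S"
    using obtain_subset_with_card_n[of "3 - card S" "{N..<N+3}"] by auto
  have fR: "finite R" using R(1) finite_subset by blast
  have "S \<inter> R = {}" using assms(1) R(1) by (meson disjoint_iff subsetD atLeastLessThan_iff lessThan_iff not_le)
  hence "card (S \<union> R) = 3" using card_Un_disjoint[OF fS fR] R(2) assms(2) by simp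
  then obtain x y z where "S \<union> R = {x,y,z}" "x \<noteq> y" "y \<noteq> z" "x \<noteq> z"
    by (auto simp: card_3_iff)
  thus ?thesis using that by blast
qed

lemma nonzero_entry:
  assumes "j0 < n" "c j0 \<noteq> 0" "\<And>j. j < j0 \<Longrightarrow> c j = 0"
  shows "lincomb_B n a c j0 = c j0"
proof -
  have "lincomb_B n a c j0 = (\<Sum>j<n. if j = j0 then c j0 else 0)"
    unfolding lincomb_B_def
  proof (rule sum.cong)
    fix j assume j: "j \<in> {..<n}"
    show "B_mat n a j0 j * c j = (if j = j0 then c j0 else 0)"
    proof (cases "j < j0")
      case True thus ?thesis using assms(3) by auto
    next
      case False thus ?thesis using Bcol[of j n j0 a] j assms(1) by auto
    qed
  qed simp
  thus ?thesis using assms(1) by simp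
qed

theorem corollary5p3:
  fixes n :: nat and a :: real
  assumes "a = 3 \<or> a > 5"
  shows "(\<forall>c :: nat \<Rightarrow> real. (\<forall>i<n + 3. lincomb_B n a c i = 0) \<longrightarrow> (\<forall>j<n. c j = 0))
       \<and> (\<forall>c :: nat \<Rightarrow> real. (\<exists>j<n. c j \<noteq> 0) \<longrightarrow>
             card {i. i < n + 3 \<and> lincomb_B n a c i \<noteq> 0} \<ge> 4)"
proof -
  have main: "card {i. i < n + 3 \<and> lincomb_B n a c i \<noteq> 0} \<ge> 4" if ex: "\<exists>j<n. c j \<noteq> 0" for c
  proof (rule ccontr)
    define S where "S = {i. i < n + 3 \<and> lincomb_B n a c i \<noteq> 0}"
    define V where "V k = (if k < n + 3 then lincomb_B n a c k else 0)" for k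
    assume "\<not> ?thesis"
    hence cS: "card S \<le> 3" unfolding S_def by simp
    have SN: "S \<subseteq> {..<n+3}" unfolding S_def by auto
    obtain x y z where xyz: "S \<subseteq> {x,y,z}" "x \<noteq> y" "y \<noteq> z" "x \<noteq> z"
      using pad3[OF SN cS] by blast
    have Vout: "V k = 0" if "k \<notin> {x,y,z}" for k
      using xyz(1) that unfolding V_def S_def by auto
    have sumeq: "(\<Sum>k<n+3. lincomb_B n a c k * w k) = V x * w x + V y * w y + V z * w z" for w
    proof -
      have "(\<Sum>k<n+3. lincomb_B n a c k * w k) = (\<Sum>k<n+3. V k * w k)"
        unfolding V_def by simp
      also have "\<dots> = (\<Sum>k\<in>{..<n+3} \<union> {x,y,z}. V k * w k)"
        by (rule sum.mono_neutral_left) (auto simp: V_def)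
      also have "\<dots> = (\<Sum>k\<in>{x,y,z}. V k * w k)"
        by (rule sum.mono_neutral_right) (auto simp: Vout)
      also have "\<dots> = V x * w x + V y * w y + V z * w z"
        using xyz by simp
      finally show ?thesis .
    qed
    have V0: "V x = 0 \<and> V y = 0 \<and> V z = 0"
    proof (cases "a = 3")
      case True
      have m0: "V x + V y + V z = 0"
        using sumeq[of "\<lambda>k. 1"] moment[of n a c "\<lambda>k. 1"] True by simp
      have m1: "V x * real x + V y * real y + V z * real z = 0"
        using sumeq[of "\<lambda>k. real k"] moment[of n a c "\<lambda>k. real k"] True by (simp add: algebra_simps)
      have m2: "V x * (real x)^2 + V y * (real y)^2 + V z * (real z)^2 = 0"
        using sumeq[of "\<lambda>k. (real k)^2"] moment[of n a c "\<lambda>k. (real k)^2"] True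
        by (simp add: algebra_simps power2_eq_square)
      show ?thesis using vander[of "real x" "real y" "real z" "V x" "V y" "V z"] xyz m0 m1 m2 by simp
    next
      case False
      hence a5: "a > 5" using assms by simp
      define r where "r = ((a - 1) + sqrt ((a-1)^2 - 4)) / 2"
      have d: "(a-1)^2 - 4 \<ge> 0"
      proof -
        have "(a-1)*(a-1) \<ge> 4*4" using a5 by (intro mult_mono) auto
        thus ?thesis by (simp add: power2_eq_square)
      qed
      have sq: "sqrt ((a-1)^2 - 4) ^ 2 = (a-1)^2 - 4" using real_sqrt_pow2[OF d] .
      have sqp: "sqrt ((a-1)^2 - 4) \<ge> 0" using d by simp
      have "(a-1) + sqrt ((a-1)^2 - 4) > 2" using a5 sqp by linarith
      hence r1: "r > 1" unfolding r_def by simp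
      have rq: "r^2 - (a-1)*r + 1 = 0" unfolding r_def using sq
        by (simp add: power2_eq_square field_simps)
      have pt: "1 - a*t + a*t^2 - t^3 = 0" if "t \<in> {1, r, 1/r}" for t
      proof -
        have "t = 1 \<or> t = r \<or> t = 1/r" using that by auto
        moreover have "1 - a*r + a*r^2 - r^3 = (1 - r) * (r^2 - (a-1)*r + 1)"
          by (simp add: algebra_simps power2_eq_square power3_eq_cube)
        moreover have "1 - a*(1/r) + a*(1/r)^2 - (1/r)^3 = (1 - 1/r) * (r^2 - (a-1)*r + 1) / r^2"
          using r1 by (simp add: field_simps power2_eq_square power3_eq_cube)
        ultimately show ?thesis using rq by auto
      qed
      have "V x * t^x + V y * t^y + V z * t^z = 0" if "t \<in> {1, r, 1/r}" for t
      proof -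
        have "(\<Sum>j<n. c j * (t^j - a * t^(j+1) + a * t^(j+2) - t^(j+3))) = (\<Sum>j<n. c j * t^j * (1 - a*t + a*t^2 - t^3))"
          by (rule sum.cong) (simp_all add: algebra_simps power_add power2_eq_square power3_eq_cube)
        also have "\<dots> = 0" using pt[OF that] by simp
        finally show ?thesis using sumeq[of "\<lambda>k. t^k"] moment[of n a c "\<lambda>k. t^k"] by simp
      qed
      thus ?thesis using expo[of x y z r "V x" "V y" "V z"] xyz r1 by blast
    qed
    hence Vz: "V k = 0" for k using Vout by (cases "k \<in> {x,y,z}") auto
    define j0 where "j0 = (LEAST j. j < n \<and> c j \<noteq> 0)"
    have j0: "j0 < n \<and> c j0 \<noteq> 0" unfolding j0_def using ex by (metis (mono_tags, lifting) LeastI_ex)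
    have "c j = 0" if "j < j0" for j
      using not_less_Least[of j "\<lambda>j. j < n \<and> c j \<noteq> 0"] that j0 unfolding j0_def by auto
    hence "lincomb_B n a c j0 = c j0" using nonzero_entry[of j0 n c a] j0 by blast
    moreover have "V j0 = lincomb_B n a c j0" unfolding V_def using j0 by simp
    ultimately show False using Vz j0 by simp
  qed
  have p1: "\<forall>j<n. c j = 0" if h: "\<forall>i<n + 3. lincomb_B n a c i = 0" for c
  proof (rule ccontr)
    assume "\<not> (\<forall>j<n. c j = 0)"
    hence "card {i. i < n + 3 \<and> lincomb_B n a c i \<noteq> 0} \<ge> 4" using main by blast
    moreover have "{i. i < n + 3 \<and> lincomb_B n a c i \<noteq> 0} = {}" using h by auto
    ultimately show False by simp
  qed
  show ?thesis using p1 main by blast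
qed

end
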